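(* Let $\{x^k\}$ be generated by the MPG algorithm described in the context, and let $k$ be an iteration at which the algorithm does not stop (so $x^{k+1}$, $d^k$, $t_k$ are defined). Suppose the index $j\in\{1,\ldots,m\}$ satisfies $$G_j(x^{k+1})\le G_j(x^k)+t_k\nabla G_j(x^k)^\top d^k+t_k\tfrac{\gamma}{2}\|d^k\|^2.$$ Then: (i) $\psi_{x^k}(p^k)\ge \frac{1}{t_k}\big(F_j(x^{k+1})-F_j(x^k)\big)-\frac{\gamma}{2}\|d^k\|^2$; (ii) for every $x\in\mathrm{dom}(F)$, $$\|x^{k+1}-x\|^2\le\|x^k-x\|^2+2\alpha\big(F_j(x^k)-F_j(x^{k+1})\big)+2\alpha t_k\max_{i=1,\ldots,m}\big(F_i(x)-F_i(x^k)\big)-2\alpha t_k\Big(\frac1\alpha-\frac\gamma2\Big)\|d^k\|^2+t_k^2\|d^k\|^2;$$ (iii) $F_j(x^{k+1})-F_j(x^k)\le -t_k\big(\frac1\alpha-\frac\gamma2\big)\|d^k\|^2$.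
   Context: Let $F:\mathbb{R}^n\to(\mathbb{R}\cup\{+\infty\})^m$, $F=(F_1,\ldots,F_m)$, with $F_j=G_j+H_j$ for $j=1,\ldots,m$, where: (i) each $G_j:\mathbb{R}^n\to\mathbb{R}$ is continuously differentiable and convex; (ii) each $H_j:\mathbb{R}^n\to\mathbb{R}\cup\{+\infty\}$ is proper, convex and continuous on its domain; (iii) $\mathrm{dom}(F):=\{x: F_j(x)<+\infty\ \forall j\}$ is nonempty and closed. For $u,v\in\mathbb{R}^m$, $u\preceq v$ means $u_j\le v_j$ for all $j$. For $x\in\mathrm{dom}(F)$ and $\alpha>0$ define $\psi_x(u):=\max_{j=1,\ldots,m}\big(\nabla G_j(x)^\top(u-x)+H_j(u)-H_j(x)\big)$, $p_\alpha(x):=\arg\min_{u\in\mathbb{R}^n}\psi_x(u)+\frac{1}{2\alpha}\|u-x\|^2$ (unique minimizer), and $\theta_\alpha(x):=\psi_x(p_\alpha(x))+\frac{1}{2\alpha}\|p_\alpha(x)-x\|^2$. MPG algorithm. Step 0: choose $x^0\in\mathrm{dom}(F)$, $\alpha>0$, $\gamma\in(0,2/\alpha)$, $0<\tau_1<\tau_2<1$; set $k=0$. Step 1: compute $p^k:=p_\alpha(x^k)$ and $\theta_\alpha(x^k)$. Step 2: if $\theta_\alpha(x^k)=0$, stop. Step 3: set $d^k:=p^k-x^k$, take $j_k^*\in\arg\max_{j}\nabla G_j(x^k)^\top d^k$, set $t=1$. Step 3.1: if $G_{j_k^*}(x^k+td^k)\le G_{j_k^*}(x^k)+t\nabla G_{j_k^*}(x^k)^\top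 d^k+t\frac{\gamma}{2}\|d^k\|^2$, go to Step 3.2; otherwise replace $t$ by some value in $[\tau_1 t,\tau_2 t]$ and repeat Step 3.1. Step 3.2: if $F(x^k+td^k)\preceq F(x^k)$, set $t_k=t$ and go to Step 4. Step 3.3: replace $t$ by some value in $[\tau_1 t,\tau_2 t]$; if $G_j(x^k+td^k)\le G_j(x^k)+t\nabla G_j(x^k)^\top d^k+t\frac{\gamma}{2}\|d^k\|^2$ for all $j=1,\ldots,m$, set $t_k=t$ and go to Step 4; otherwise repeat Step 3.3. Step 4: $x^{k+1}:=x^k+t_kd^k$, $k\leftarrow k+1$, go to Step 1. *)

theory Defs
  imports "HOL-Analysis.Analysis"
begin

text \<open>Objectives F_j = G_j + H_j, j = 1..m. Each H_j is represented by a real-valued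
function H j together with its effective domain D j (outside D j the value is +infinity).\<close>

definition domF :: "nat \<Rightarrow> (nat \<Rightarrow> 'a set) \<Rightarrow> 'a set" where
  "domF m D = (\<Inter>j\<in>{1..m}. D j)"

definition psi :: "nat \<Rightarrow> (nat \<Rightarrow> 'a \<Rightarrow> 'a::real_inner) \<Rightarrow> (nat \<Rightarrow> 'a \<Rightarrow> real) \<Rightarrow> 'a \<Rightarrow> 'a \<Rightarrow> real" where
  "psi m gradG H x u = Max ((\<lambda>j. gradG j x \<bullet> (u - x) + H j u - H j x) ` {1..m})"

text \<open>The proximal point: the unique minimizer of psi_x(u) + |u-x|^2/(2 alpha).
Outside dom(F) the objective is +infinity, so the minimization is over dom(F).\<close>
definition prox :: "nat \<Rightarrow> (nat \<Rightarrow> 'a \<Rightarrow> 'a::real_inner) \<Rightarrow> (nat \<Rightarrow> 'a \<Rightarrow> real) \<Rightarrow> (nat \<Rightarrow> 'a set)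
    \<Rightarrow> real \<Rightarrow> 'a \<Rightarrow> 'a" where
  "prox m gradG H D \<alpha> x = (THE p. p \<in> domF m D \<and>
     (\<forall>u\<in>domF m D. psi m gradG H x p + (norm (p - x))^2 / (2*\<alpha>)
                    \<le> psi m gradG H x u + (norm (u - x))^2 / (2*\<alpha>)))"

definition theta :: "nat \<Rightarrow> (nat \<Rightarrow> 'a \<Rightarrow> 'a::real_inner) \<Rightarrow> (nat \<Rightarrow> 'a \<Rightarrow> real) \<Rightarrow> (nat \<Rightarrow> 'a set)
    \<Rightarrow> real \<Rightarrow> 'a \<Rightarrow> real" where
  "theta m gradG H D \<alpha> x =
     (let p = prox m gradG H D \<alpha> x in psi m gradG H x p + (norm (p - x))^2 / (2*\<alpha>))"

definition armijo :: "(nat \<Rightarrow> 'a \<Rightarrow> real) \<Rightarrow> (nat \<Rightarrow> 'a \<Rightarrow> 'a::real_inner) \<Rightarrow> real \<Rightarrow> nat \<Rightarrow> 'a \<Rightarrow> 'a \<Rightarrow> real \<Rightarrow> bool" where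
  "armijo G gradG \<gamma> j x d t \<longleftrightarrow>
     G j (x + t *\<^sub>R d) \<le> G j x + t * (gradG j x \<bullet> d) + t * (\<gamma>/2) * (norm d)^2"

definition Fdecr :: "nat \<Rightarrow> (nat \<Rightarrow> 'a \<Rightarrow> real) \<Rightarrow> (nat \<Rightarrow> 'a \<Rightarrow> real) \<Rightarrow> (nat \<Rightarrow> 'a set)
    \<Rightarrow> 'a \<Rightarrow> 'a::real_vector \<Rightarrow> real \<Rightarrow> bool" where
  "Fdecr m G H D x d t \<longleftrightarrow> x + t *\<^sub>R d \<in> domF m D \<and>
     (\<forall>j\<in>{1..m}. G j (x + t *\<^sub>R d) + H j (x + t *\<^sub>R d) \<le> G j x + H j x)"

text \<open>Trial step sizes visited in Step 3.1.\<close>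
inductive ls31 :: "(nat \<Rightarrow> 'a::real_inner \<Rightarrow> real) \<Rightarrow> (nat \<Rightarrow> 'a \<Rightarrow> 'a) \<Rightarrow> real \<Rightarrow> real \<Rightarrow> real \<Rightarrow> 'a \<Rightarrow> 'a \<Rightarrow> nat \<Rightarrow> real \<Rightarrow> bool" for G gradG \<gamma> \<tau>1 \<tau>2 x d js where
  ls31_start: "ls31 G gradG \<gamma> \<tau>1 \<tau>2 x d js 1"
| ls31_back: "ls31 G gradG \<gamma> \<tau>1 \<tau>2 x d js t \<Longrightarrow> \<not> armijo G gradG \<gamma> js x d t \<Longrightarrow>
         \<tau>1 * t \<le> t' \<Longrightarrow> t' \<le> \<tau>2 * t \<Longrightarrow> ls31 G gradG \<gamma> \<tau>1 \<tau>2 x d js t'"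

text \<open>Trial step sizes visited in Step 3.3.\<close>
inductive ls33 for m G gradG H D \<gamma> \<tau>1 \<tau>2 x d js where
  ls33_enter: "ls31 G gradG \<gamma> \<tau>1 \<tau>2 x d js t \<Longrightarrow> armijo G gradG \<gamma> js x d t \<Longrightarrow>
          \<not> Fdecr m G H D x d t \<Longrightarrow> \<tau>1 * t \<le> t' \<Longrightarrow> t' \<le> \<tau>2 * t \<Longrightarrow>
          ls33 m G gradG H D \<gamma> \<tau>1 \<tau>2 x d js t'"
| ls33_back: "ls33 m G gradG H D \<gamma> \<tau>1 \<tau>2 x d js t \<Longrightarrow>
         \<not> (\<forall>j\<in>{1..m}. armijo G gradG \<gamma> j x d t) \<Longrightarrow>
         \<tau>1 * t \<le> t' \<Longrightarrow> t' \<le> \<tau>2 * t \<Longrightarrow> ls33 m G gradG H D \<gamma> \<tau>1 \<tau>2 x d js t'"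

text \<open>Step sizes t_k that the line search (Steps 3.1-3.3) can return.\<close>
definition ls_out where
  "ls_out m G gradG H D \<gamma> \<tau>1 \<tau>2 x d js t \<longleftrightarrow>
     (ls31 G gradG \<gamma> \<tau>1 \<tau>2 x d js t \<and> armijo G gradG \<gamma> js x d t \<and> Fdecr m G H D x d t) \<or>
     (ls33 m G gradG H D \<gamma> \<tau>1 \<tau>2 x d js t \<and> (\<forall>j\<in>{1..m}. armijo G gradG \<gamma> j x d t))"

text \<open>One non-stopping iteration of MPG from x, producing step size t and next iterate x'.\<close>
definition mpg_step where
  "mpg_step m G gradG H D \<alpha> \<gamma> \<tau>1 \<tau>2 x t x' \<longleftrightarrow>
     theta m gradG H D \<alpha> x \<noteq> 0 \<and>
     (let d = prox m gradG H D \<alpha> x - x in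
       (\<exists>js\<in>{1..m}. (\<forall>j\<in>{1..m}. gradG j x \<bullet> d \<le> gradG js x \<bullet> d) \<and>
          ls_out m G gradG H D \<gamma> \<tau>1 \<tau>2 x d js t) \<and>
       x' = x + t *\<^sub>R d)"

end

theory Submission
  imports Defs
begin


lemma Max_cont:
  fixes f :: "nat \<Rightarrow> 'a::topological_space \<Rightarrow> real"
  assumes "finite I" "I \<noteq> {}" "\<forall>i\<in>I. continuous_on S (f i)"
  shows "continuous_on S (\<lambda>u. Max ((\<lambda>i. f i u) ` I))"
  using assms
proof (induction I rule: finite_ne_induct)
  case (singleton x)
  then show ?case by simp
next
  case (insert x F)
  have "continuous_on S (\<lambda>u. max (f x u) (Max ((\<lambda>i. f i u) ` F)))"
    using insert by (intro continuous_on_max) auto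
  then show ?case using insert by simp
qed

lemma psi_ge:
  assumes "i \<in> {1..m}"
  shows "gradG i x \<bullet> (u - x) + H i u - H i x \<le> psi m gradG H x u"
  unfolding psi_def using assms by (intro Max_ge) auto

lemma psi_le:
  assumes "m \<ge> 1" "\<forall>i\<in>{1..m}. gradG i x \<bullet> (u - x) + H i u - H i x \<le> c"
  shows "psi m gradG H x u \<le> c"
  unfolding psi_def using assms by (subst Max_le_iff) auto

lemma psi_self:
  assumes "m \<ge> 1"
  shows "psi m gradG H x x = 0"
proof -
  have "(\<lambda>j. gradG j x \<bullet> (x - x) + H j x - H j x) ` {1..m} = {0}"
    using assms by auto
  then show ?thesis unfolding psi_def by simp
qed

lemma domF_sub: "i \<in> {1..m} \<Longrightarrow> domF m D \<subseteq> D i"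
  unfolding domF_def by auto

lemma domF_convex: "\<forall>i\<in>{1..m}. convex (D i) \<Longrightarrow> convex (domF m D)"
  unfolding domF_def by (intro convex_INT) auto

lemma psi_conv:
  assumes "m \<ge> 1" "\<forall>i\<in>{1..m}. convex_on (D i) (H i)"
    and "u \<in> domF m D" "v \<in> domF m D" "0 \<le> s" "s \<le> 1"
  shows "psi m gradG H x ((1-s) *\<^sub>R u + s *\<^sub>R v)
     \<le> (1-s) * psi m gradG H x u + s * psi m gradG H x v"
proof (rule psi_le[OF assms(1)], intro ballI)
  fix i assume i: "i \<in> {1..m}"
  have uD: "u \<in> D i" and vD: "v \<in> D i" using domF_sub[OF i, of D] assms(3,4) by blast+
  have H: "H i ((1-s) *\<^sub>R u + s *\<^sub>R v) \<le> (1-s) * H i u + s * H i v"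
    using convex_onD[of "D i" "H i"] assms i uD vD by auto
  have lin: "gradG i x \<bullet> ((1-s) *\<^sub>R u + s *\<^sub>R v - x)
     = (1-s) * (gradG i x \<bullet> (u - x)) + s * (gradG i x \<bullet> (v - x))"
    by (simp add: algebra_simps inner_diff_right)
  have a: "gradG i x \<bullet> (u - x) + H i u - H i x \<le> psi m gradG H x u" by (rule psi_ge[OF i])
  have b: "gradG i x \<bullet> (v - x) + H i v - H i x \<le> psi m gradG H x v" by (rule psi_ge[OF i])
  have a': "(1-s) * (gradG i x \<bullet> (u - x) + H i u - H i x) \<le> (1-s) * psi m gradG H x u"
    using a assms by (intro mult_left_mono) auto
  have b': "s * (gradG i x \<bullet> (v - x) + H i v - H i x) \<le> s * psi m gradG H x v"
    using b assms by (intro mult_left_mono) auto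
  show "gradG i x \<bullet> ((1-s) *\<^sub>R u + s *\<^sub>R v - x) + H i ((1-s) *\<^sub>R u + s *\<^sub>R v) - H i x
     \<le> (1-s) * psi m gradG H x u + s * psi m gradG H x v"
    using H lin a' b' by (simp add: algebra_simps)
qed

lemma grad_ineq:
  fixes g :: "'a::real_inner \<Rightarrow> real" and gg :: "'a \<Rightarrow> 'a"
  assumes cv: "convex_on UNIV g" and dg: "\<forall>y. (g has_derivative (\<lambda>h. gg y \<bullet> h)) (at y)"
  shows "g u \<ge> g x + gg x \<bullet> (u - x)"
proof -
  define w where "w = u - x"
  define \<phi> where "\<phi> = (\<lambda>s::real. g (x + s *\<^sub>R w))"
  have "convex_on UNIV \<phi>"
  proof (rule convex_onI)
    fix t a b :: real assume t: "0 < t" "t < 1"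
    have eq: "x + ((1 - t) *\<^sub>R a + t *\<^sub>R b) *\<^sub>R w = (1-t) *\<^sub>R (x + a *\<^sub>R w) + t *\<^sub>R (x + b *\<^sub>R w)"
      by (simp add: algebra_simps)
    show "\<phi> ((1 - t) *\<^sub>R a + t *\<^sub>R b) \<le> (1 - t) * \<phi> a + t * \<phi> b"
      unfolding \<phi>_def eq using convex_onD[OF cv, of t] t by auto
  qed simp
  have d1: "((\<lambda>s::real. x + s *\<^sub>R w) has_derivative (\<lambda>h. h *\<^sub>R w)) (at 0)"
    by (auto intro!: derivative_eq_intros)
  have d2: "(g has_derivative (\<lambda>h. gg x \<bullet> h)) (at ((\<lambda>s::real. x + s *\<^sub>R w) 0))"
    using dg by simp
  have "(\<phi> has_derivative (\<lambda>h. gg x \<bullet> (h *\<^sub>R w))) (at 0)"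
    unfolding \<phi>_def using has_derivative_compose[OF d1 d2] by simp
  moreover have "(\<lambda>h. gg x \<bullet> (h *\<^sub>R w)) = (*) (gg x \<bullet> w)" by (auto simp: mult.commute)
  ultimately have "(\<phi> has_field_derivative (gg x \<bullet> w)) (at 0 within UNIV)"
    unfolding has_field_derivative_def by simp
  from convex_on_imp_above_tangent[OF \<open>convex_on UNIV \<phi>\<close> _ _ _ this, of 1]
  have "\<phi> 1 - \<phi> 0 \<ge> gg x \<bullet> w" by simp
  then show ?thesis unfolding \<phi>_def w_def by simp
qed

lemma eps_arg:
  fixes A B :: real
  assumes "\<forall>s. 0 < s \<and> s \<le> 1 \<longrightarrow> 0 \<le> A + s * B" "B \<ge> 0"
  shows "0 \<le> A"
proof (rule ccontr)
  assume "\<not> 0 \<le> A"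
  define s where "s = min 1 (-A / (2 * (B + 1)))"
  have "-A / (2 * (B + 1)) > 0" using \<open>\<not> 0 \<le> A\<close> assms(2) by (intro divide_pos_pos) auto
  then have s: "0 < s" "s \<le> 1" unfolding s_def by auto
  have "s * B \<le> (-A / (2 * (B + 1))) * B" unfolding s_def using assms(2)
    by (intro mult_right_mono) auto
  also have "\<dots> = -A/2 * (B / (B+1))" using assms(2) by (simp add: field_simps)
  also have "\<dots> < -A" 
  proof -
    have "B / (B+1) < 1" using assms(2) by simp
    then have "-A/2 * (B / (B+1)) \<le> -A/2" using \<open>\<not> 0 \<le> A\<close> assms(2) 
      by (intro mult_left_le) auto
    then show ?thesis using \<open>\<not> 0 \<le> A\<close> by linarith
  qed
  finally show False using assms(1) s by force
qed

lemma norm_sq_expand: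
  fixes a b :: "'a::real_inner"
  shows "(norm (a + s *\<^sub>R b))^2 = (norm a)^2 + 2 * s * (a \<bullet> b) + s^2 * (norm b)^2"
  unfolding power2_norm_eq_inner by (simp add: inner_add_left inner_add_right inner_commute algebra_simps power2_eq_square)

lemma psi_cont:
  assumes "m \<ge> 1" "\<forall>i\<in>{1..m}. continuous_on (D i) (H i)" "S \<subseteq> domF m D"
  shows "continuous_on S (psi m gradG H x)"
proof -
  have "continuous_on S (\<lambda>u. Max ((\<lambda>i. gradG i x \<bullet> (u - x) + H i u - H i x) ` {1..m}))"
  proof (rule Max_cont, simp, use assms in simp, intro ballI)
    fix i assume i: "i \<in> {1..m}"
    have "continuous_on S (H i)"
      using assms(2) i assms(3) domF_sub[OF i, of D] continuous_on_subset by blast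
    then show "continuous_on S (\<lambda>u. gradG i x \<bullet> (u - x) + H i u - H i x)"
      by (intro continuous_intros)
  qed
  then show ?thesis unfolding psi_def by (simp add: fun_eq_iff)
qed

lemma prox_exists:
  fixes x :: "'a::euclidean_space"
  assumes m: "m \<ge> 1" and hc: "\<forall>i\<in>{1..m}. convex (D i) \<and> convex_on (D i) (H i)"
    and ct: "\<forall>i\<in>{1..m}. continuous_on (D i) (H i)"
    and cl: "closed (domF m D)" and x: "x \<in> domF m D" and al: "\<alpha> > 0"
  shows "\<exists>p\<in>domF m D. \<forall>u\<in>domF m D. psi m gradG H x p + (norm (p - x))^2 / (2*\<alpha>)
                    \<le> psi m gradG H x u + (norm (u - x))^2 / (2*\<alpha>)"
proof -
  let ?P = "psi m gradG H x"
  let ?f = "\<lambda>u. ?P u + (norm (u - x))^2 / (2*\<alpha>)"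
  have cvx: "convex (domF m D)" using hc domF_convex[of m D] by auto
  have hcv: "\<forall>i\<in>{1..m}. convex_on (D i) (H i)" using hc by auto
  define K1 where "K1 = domF m D \<inter> cball x 1"
  have "compact K1" unfolding K1_def using cl by (intro closed_Int_compact compact_cball)
  moreover have "K1 \<noteq> {}" unfolding K1_def using x by auto
  moreover have "continuous_on K1 ?P" by (rule psi_cont[OF m ct]) (auto simp: K1_def)
  ultimately obtain v0 where v0: "v0 \<in> K1" "\<forall>y\<in>K1. ?P v0 \<le> ?P y"
    using continuous_attains_inf by blast
  define L where "L = max 0 (- ?P v0)"
  have L0: "L \<ge> 0" unfolding L_def by simp
  have lb: "?P u \<ge> - norm (u - x) * L" if u: "u \<in> domF m D" "norm (u - x) \<ge> 1" for u
  proof -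
    define r where "r = norm (u - x)"
    have r: "r \<ge> 1" using u r_def by simp
    define v where "v = (1 - 1/r) *\<^sub>R x + (1/r) *\<^sub>R u"
    have vD: "v \<in> domF m D" unfolding v_def using cvx x u r
      by (intro convexD) auto
    have vx: "v - x = (1/r) *\<^sub>R (u - x)" unfolding v_def by (simp add: algebra_simps)
    have "u \<noteq> x" using r r_def by auto
    then have "norm (v - x) = 1" using r r_def vx by simp
    with vD have "v \<in> K1" unfolding K1_def by (simp add: dist_norm norm_minus_commute)
    then have "?P v0 \<le> ?P v" using v0 by blast
    then have "?P v \<ge> - L" unfolding L_def by linarith
    moreover have "?P v \<le> (1 - 1/r) * ?P x + (1/r) * ?P u"
      unfolding v_def using r by (intro psi_conv[OF m hcv x u(1)]) auto
    ultimately have "- L \<le> (1/r) * ?P u" using psi_self[OF m, of gradG H x] by simp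
    then have "r * (-L) \<le> r * ((1/r) * ?P u)" using r by (intro mult_left_mono) auto
    then show ?thesis using r unfolding r_def[symmetric] by simp
  qed
  define R where "R = 2 * \<alpha> * L + 1"
  have R1: "R \<ge> 1" unfolding R_def using al L0 by simp
  define K where "K = domF m D \<inter> cball x R"
  have "compact K" unfolding K_def using cl by (intro closed_Int_compact compact_cball)
  moreover have "K \<noteq> {}" unfolding K_def using x R1 by auto
  moreover have "continuous_on K ?f"
    using al by (intro continuous_intros psi_cont[OF m ct]) (auto simp: K_def)
  ultimately obtain q where q: "q \<in> K" "\<forall>y\<in>K. ?f q \<le> ?f y"
    using continuous_attains_inf by blast
  have fq: "?f q \<le> 0"
  proof -
    have "x \<in> K" unfolding K_def using x R1 by auto
    then have "?f q \<le> ?f x" using q by blast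
    then show ?thesis using psi_self[OF m, of gradG H x] by simp
  qed
  show ?thesis
  proof (intro bexI ballI)
    show "q \<in> domF m D" using q K_def by auto
    fix u assume u: "u \<in> domF m D"
    show "?f q \<le> ?f u"
    proof (cases "norm (u - x) \<le> R")
      case True
      then have "u \<in> K" unfolding K_def using u by (simp add: dist_norm norm_minus_commute)
      then show ?thesis using q by blast
    next
      case False
      define r where "r = norm (u - x)"
      have r: "r > R" using False r_def by simp
      have "?P u \<ge> - r * L" using lb[OF u] r R1 r_def by simp
      moreover have "r / (2*\<alpha>) > L"
      proof -
        have "r > 2 * \<alpha> * L" using r R_def by simp
        then show ?thesis using al by (simp add: field_simps)
      qed
      then have "r * (r / (2*\<alpha>)) > r * L" using r R1 by (intro mult_strict_left_mono) auto
      then have "r^2 / (2*\<alpha>) > r * L" by (simp add: power2_eq_square)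
      ultimately have "?f u > 0" unfolding r_def by simp
      then show ?thesis using fq by simp
    qed
  qed
qed

lemma min_VI:
  fixes x :: "'a::euclidean_space"
  assumes m: "m \<ge> 1" and hcv: "\<forall>i\<in>{1..m}. convex_on (D i) (H i)"
    and cvx: "convex (domF m D)" and al: "\<alpha> > 0"
    and p: "p \<in> domF m D"
    and pmin: "\<forall>u\<in>domF m D. psi m gradG H x p + (norm (p - x))^2 / (2*\<alpha>)
                    \<le> psi m gradG H x u + (norm (u - x))^2 / (2*\<alpha>)"
    and u: "u \<in> domF m D"
  shows "psi m gradG H x p + ((p - x) \<bullet> (p - u)) / \<alpha> \<le> psi m gradG H x u"
proof -
  let ?P = "psi m gradG H x"
  define A where "A = ?P u - ?P p + ((p - x) \<bullet> (u - p)) / \<alpha>"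
  define B where "B = (norm (u - p))^2 / (2*\<alpha>)"
  have "0 \<le> A + s * B" if s: "0 < s" "s \<le> 1" for s
  proof -
    define w where "w = (1 - s) *\<^sub>R p + s *\<^sub>R u"
    have wD: "w \<in> domF m D" unfolding w_def using cvx p u s by (intro convexD) auto
    have "?P w \<le> (1 - s) * ?P p + s * ?P u" unfolding w_def
      using s by (intro psi_conv[OF m hcv p u]) auto
    moreover have "w - x = (p - x) + s *\<^sub>R (u - p)" unfolding w_def by (simp add: algebra_simps)
    then have "(norm (w - x))^2 = (norm (p - x))^2 + 2 * s * ((p - x) \<bullet> (u - p)) + s^2 * (norm (u - p))^2"
      using norm_sq_expand by metis
    moreover have "?P p + (norm (p - x))^2 / (2*\<alpha>) \<le> ?P w + (norm (w - x))^2 / (2*\<alpha>)"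
      using pmin wD by blast
    ultimately have "0 \<le> s * (?P u - ?P p) + (2 * s * ((p - x) \<bullet> (u - p)) + s^2 * (norm (u - p))^2) / (2*\<alpha>)"
    proof -
      assume c1: "?P w \<le> (1 - s) * ?P p + s * ?P u"
        and c2: "(norm (w - x))^2 = (norm (p - x))^2 + 2 * s * ((p - x) \<bullet> (u - p)) + s^2 * (norm (u - p))^2"
        and c3: "?P p + (norm (p - x))^2 / (2*\<alpha>) \<le> ?P w + (norm (w - x))^2 / (2*\<alpha>)"
      have "(norm (w - x))^2 / (2*\<alpha>) = (norm (p - x))^2 / (2*\<alpha>)
         + (2 * s * ((p - x) \<bullet> (u - p)) + s^2 * (norm (u - p))^2) / (2*\<alpha>)"
        unfolding c2 by (simp add: add_divide_distrib)
      then show ?thesis using c1 c3 by (simp add: algebra_simps)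
    qed
    also have "\<dots> = s * (A + s * B)" unfolding A_def B_def using al
      by (simp add: field_simps power2_eq_square)
    finally show ?thesis using s by (simp add: zero_le_mult_iff)
  qed
  then have "0 \<le> A" using al by (intro eps_arg[of A B]) (auto simp: B_def)
  moreover have "(p - x) \<bullet> (p - u) = - ((p - x) \<bullet> (u - p))"
    by (simp add: inner_diff_right)
  ultimately show ?thesis unfolding A_def by (simp add: field_simps)
qed

lemma prox_props:
  fixes x :: "'a::euclidean_space"
  assumes m: "m \<ge> 1" and hc: "\<forall>i\<in>{1..m}. convex (D i) \<and> convex_on (D i) (H i)"
    and ct: "\<forall>i\<in>{1..m}. continuous_on (D i) (H i)"
    and cl: "closed (domF m D)" and x: "x \<in> domF m D" and al: "\<alpha> > 0"
  shows "prox m gradG H D \<alpha> x \<in> domF m D \<and>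
    (\<forall>u\<in>domF m D. psi m gradG H x (prox m gradG H D \<alpha> x)
       + ((prox m gradG H D \<alpha> x - x) \<bullet> (prox m gradG H D \<alpha> x - u)) / \<alpha> \<le> psi m gradG H x u)"
proof -
  let ?Q = "\<lambda>p. p \<in> domF m D \<and>
     (\<forall>u\<in>domF m D. psi m gradG H x p + (norm (p - x))^2 / (2*\<alpha>)
                    \<le> psi m gradG H x u + (norm (u - x))^2 / (2*\<alpha>))"
  have cvx: "convex (domF m D)" using hc domF_convex[of m D] by auto
  have hcv: "\<forall>i\<in>{1..m}. convex_on (D i) (H i)" using hc by auto
  obtain p where pD: "p \<in> domF m D" and pmin: "\<forall>u\<in>domF m D. psi m gradG H x p + (norm (p - x))^2 / (2*\<alpha>)
                    \<le> psi m gradG H x u + (norm (u - x))^2 / (2*\<alpha>)"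
    using prox_exists[OF m hc ct cl x al] by blast
  note VIp = min_VI[OF m hcv cvx al pD pmin]
  have uniq: "q = p" if q: "?Q q" for q
  proof -
    from q have qD: "q \<in> domF m D" and qmin: "\<forall>u\<in>domF m D. psi m gradG H x q + (norm (q - x))^2 / (2*\<alpha>)
                    \<le> psi m gradG H x u + (norm (u - x))^2 / (2*\<alpha>)" by auto
    have a: "psi m gradG H x p + ((p - x) \<bullet> (p - q)) / \<alpha> \<le> psi m gradG H x q"
      by (rule VIp[OF qD])
    have b: "psi m gradG H x q + ((q - x) \<bullet> (q - p)) / \<alpha> \<le> psi m gradG H x p"
      by (rule min_VI[OF m hcv cvx al qD qmin pD])
    have "((p - x) \<bullet> (p - q)) / \<alpha> + ((q - x) \<bullet> (q - p)) / \<alpha> \<le> 0" using a b by linarith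
    moreover have "((p - x) \<bullet> (p - q)) + ((q - x) \<bullet> (q - p)) = (p - q) \<bullet> (p - q)"
      by (simp add: algebra_simps inner_diff_left inner_diff_right inner_commute)
    ultimately have "(p - q) \<bullet> (p - q) \<le> 0" using al by (simp add: add_divide_distrib[symmetric] divide_le_0_iff)
    then have "(p - q) \<bullet> (p - q) = 0" using inner_ge_zero[of "p - q"] by linarith
    then show ?thesis by simp
  qed
  have Qp: "?Q p" using pD pmin by blast
  have "prox m gradG H D \<alpha> x = p" unfolding prox_def
    by (rule the_equality[of ?Q p, OF Qp uniq])
  then show ?thesis using pD VIp by simp
qed

lemma ls31_bounds:
  assumes "ls31 G gradG \<gamma> \<tau>1 \<tau>2 x d js t" "0 < \<tau>1" "\<tau>2 < 1"
  shows "0 < t \<and> t \<le> 1"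
  using assms
proof (induction rule: ls31.induct)
  case ls31_start
  then show ?case by simp
next
  case (ls31_back t t')
  have "0 < \<tau>1 * t" using ls31_back by simp
  moreover have "\<tau>2 * t \<le> 1 * t" using ls31_back by (intro mult_right_mono) auto
  ultimately show ?case using ls31_back by linarith
qed

lemma ls33_bounds:
  assumes "ls33 m G gradG H D \<gamma> \<tau>1 \<tau>2 x d js t" "0 < \<tau>1" "\<tau>2 < 1"
  shows "0 < t \<and> t \<le> 1"
  using assms
proof (induction rule: ls33.induct)
  case (ls33_enter t t')
  then have t: "0 < t \<and> t \<le> 1" using ls31_bounds by blast
  have "0 < \<tau>1 * t" using ls33_enter t by simp
  moreover have "\<tau>2 * t \<le> 1 * t" using ls33_enter t by (intro mult_right_mono) auto
  ultimately show ?case using ls33_enter t by linarith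
next
  case (ls33_back t t')
  have "0 < \<tau>1 * t" using ls33_back by simp
  moreover have "\<tau>2 * t \<le> 1 * t" using ls33_back by (intro mult_right_mono) auto
  ultimately show ?case using ls33_back by linarith
qed

lemma step_facts:
  assumes "mpg_step m G gradG H D \<alpha> \<gamma> \<tau>1 \<tau>2 x t x'" "0 < \<tau>1" "\<tau>2 < 1"
  shows "0 < t \<and> t \<le> 1 \<and> x' = x + t *\<^sub>R (prox m gradG H D \<alpha> x - x)"
proof -
  from assms(1) obtain js where
    "ls_out m G gradG H D \<gamma> \<tau>1 \<tau>2 x (prox m gradG H D \<alpha> x - x) js t"
    and x': "x' = x + t *\<^sub>R (prox m gradG H D \<alpha> x - x)"
    unfolding mpg_step_def Let_def by blast
  then have "0 < t \<and> t \<le> 1" unfolding ls_out_def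
    using ls31_bounds[OF _ assms(2,3)] ls33_bounds[OF _ assms(2,3)] by blast
  then show ?thesis using x' by blast
qed

theorem mainTheorem2:
  fixes G :: "nat \<Rightarrow> 'a::euclidean_space \<Rightarrow> real"
    and gradG :: "nat \<Rightarrow> 'a \<Rightarrow> 'a"
    and H :: "nat \<Rightarrow> 'a \<Rightarrow> real"
    and D :: "nat \<Rightarrow> 'a set"
    and m :: nat and \<alpha> \<gamma> \<tau>1 \<tau>2 :: real
    and xs :: "nat \<Rightarrow> 'a" and ts :: "nat \<Rightarrow> real" and k j :: nat
  assumes m_pos: "m \<ge> 1"
    and G_grad: "\<forall>i\<in>{1..m}. \<forall>x. (G i has_derivative (\<lambda>h. gradG i x \<bullet> h)) (at x)"
    and G_C1: "\<forall>i\<in>{1..m}. continuous_on UNIV (gradG i)"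
    and G_convex: "\<forall>i\<in>{1..m}. convex_on UNIV (G i)"
    and H_proper: "\<forall>i\<in>{1..m}. D i \<noteq> {}"
    and H_convex: "\<forall>i\<in>{1..m}. convex (D i) \<and> convex_on (D i) (H i)"
    and H_cont: "\<forall>i\<in>{1..m}. continuous_on (D i) (H i)"
    and dom_ne: "domF m D \<noteq> {}"
    and dom_closed: "closed (domF m D)"
    and alpha_pos: "\<alpha> > 0"
    and gamma: "0 < \<gamma>" "\<gamma> < 2 / \<alpha>"
    and taus: "0 < \<tau>1" "\<tau>1 < \<tau>2" "\<tau>2 < 1"
    and x0: "xs 0 \<in> domF m D"
    and iter: "\<forall>i\<le>k. mpg_step m G gradG H D \<alpha> \<gamma> \<tau>1 \<tau>2 (xs i) (ts i) (xs (Suc i))"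
    and j_idx: "j \<in> {1..m}"
    and j_ineq: "G j (xs (Suc k)) \<le> G j (xs k)
        + ts k * (gradG j (xs k) \<bullet> (prox m gradG H D \<alpha> (xs k) - xs k))
        + ts k * (\<gamma> / 2) * (norm (prox m gradG H D \<alpha> (xs k) - xs k))^2"
  shows "(psi m gradG H (xs k) (prox m gradG H D \<alpha> (xs k))
           \<ge> (1 / ts k) * ((G j (xs (Suc k)) + H j (xs (Suc k))) - (G j (xs k) + H j (xs k)))
             - (\<gamma> / 2) * (norm (prox m gradG H D \<alpha> (xs k) - xs k))^2)
    \<and> (\<forall>x\<in>domF m D.
           (norm (xs (Suc k) - x))^2 \<le> (norm (xs k - x))^2
             + 2 * \<alpha> * ((G j (xs k) + H j (xs k)) - (G j (xs (Suc k)) + H j (xs (Suc k))))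
             + 2 * \<alpha> * ts k * Max ((\<lambda>i. (G i x + H i x) - (G i (xs k) + H i (xs k))) ` {1..m})
             - 2 * \<alpha> * ts k * (1 / \<alpha> - \<gamma> / 2) * (norm (prox m gradG H D \<alpha> (xs k) - xs k))^2
             + (ts k)^2 * (norm (prox m gradG H D \<alpha> (xs k) - xs k))^2)
    \<and> ((G j (xs (Suc k)) + H j (xs (Suc k))) - (G j (xs k) + H j (xs k))
           \<le> - ts k * (1 / \<alpha> - \<gamma> / 2) * (norm (prox m gradG H D \<alpha> (xs k) - xs k))^2)"
proof -
  let ?P = "psi m gradG H (xs k)"
  let ?F = "\<lambda>i y. G i y + H i y"
  have hcv: "\<forall>i\<in>{1..m}. convex_on (D i) (H i)" using H_convex by auto
  have cvx: "convex (domF m D)" using H_convex domF_convex[of m D] by auto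
  have dom_it: "i \<le> k \<longrightarrow> xs i \<in> domF m D" for i
  proof (induction i)
    case 0
    then show ?case using x0 by simp
  next
    case (Suc i)
    show ?case
    proof
      assume si: "Suc i \<le> k"
      then have xi: "xs i \<in> domF m D" using Suc by simp
      have st: "0 < ts i \<and> ts i \<le> 1 \<and> xs (Suc i) = xs i + ts i *\<^sub>R (prox m gradG H D \<alpha> (xs i) - xs i)"
      proof -
        have "mpg_step m G gradG H D \<alpha> \<gamma> \<tau>1 \<tau>2 (xs i) (ts i) (xs (Suc i))" using iter si by simp
        from step_facts[OF this taus(1) taus(3)] show ?thesis .
      qed
      have pi: "prox m gradG H D \<alpha> (xs i) \<in> domF m D"
        using prox_props[OF m_pos H_convex H_cont dom_closed xi alpha_pos] by blast
      have "xs (Suc i) = (1 - ts i) *\<^sub>R xs i + ts i *\<^sub>R prox m gradG H D \<alpha> (xs i)"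
        using st by (simp add: algebra_simps)
      then show "xs (Suc i) \<in> domF m D" using convexD[OF cvx xi pi] st by simp
    qed
  qed
  define x where "x = xs k"
  define p where "p = prox m gradG H D \<alpha> x"
  define d where "d = p - x"
  define t where "t = ts k"
  have xD: "x \<in> domF m D" using dom_it x_def by blast
  have pp: "p \<in> domF m D \<and> (\<forall>u\<in>domF m D. ?P p + (d \<bullet> (p - u)) / \<alpha> \<le> ?P u)"
    using prox_props[OF m_pos H_convex H_cont dom_closed xD alpha_pos] unfolding p_def d_def x_def
    by blast
  have st: "0 < t \<and> t \<le> 1 \<and> xs (Suc k) = x + t *\<^sub>R d"
  proof -
    have "mpg_step m G gradG H D \<alpha> \<gamma> \<tau>1 \<tau>2 (xs k) (ts k) (xs (Suc k))" using iter by simp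
    from step_facts[OF this taus(1) taus(3)] show ?thesis unfolding t_def x_def d_def p_def .
  qed
  have t0: "0 < t" and t1: "t \<le> 1" using st by auto
  have jD: "x \<in> D j" "p \<in> D j" using domF_sub[OF j_idx, of D] xD pp by auto
  have x'eq: "xs (Suc k) = (1 - t) *\<^sub>R x + t *\<^sub>R p" using st unfolding d_def by (simp add: algebra_simps)
  have Hj: "H j (xs (Suc k)) \<le> (1 - t) * H j x + t * H j p"
    unfolding x'eq using convex_onD[of "D j" "H j"] hcv j_idx jD t0 t1 by auto
  have Gj: "G j (xs (Suc k)) \<le> G j x + t * (gradG j x \<bullet> d) + t * (\<gamma> / 2) * (norm d)^2"
    using j_ineq unfolding x_def d_def p_def t_def by simp
  have comp: "gradG j x \<bullet> d + H j p - H j x \<le> ?P p"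
    using psi_ge[OF j_idx, of gradG x p H] unfolding d_def x_def by simp
  have "t * (gradG j x \<bullet> d + H j p - H j x) \<le> t * ?P p"
    using comp t0 by (intro mult_left_mono) auto
  then have key: "?F j (xs (Suc k)) - ?F j x \<le> t * ?P p + t * (\<gamma> / 2) * (norm d)^2"
    using Gj Hj by (simp add: algebra_simps)
  have Pp: "?P p \<le> - ((norm d)^2 / \<alpha>)"
  proof -
    have "?P p + (d \<bullet> (p - x)) / \<alpha> \<le> ?P x" using pp xD by blast
    moreover have "?P x = 0" unfolding x_def by (rule psi_self[OF m_pos])
    moreover have "d \<bullet> (p - x) = (norm d)^2" unfolding d_def by (simp add: power2_norm_eq_inner)
    ultimately show ?thesis by (simp add: x_def)
  qed
  have i: "?P p \<ge> (1 / t) * (?F j (xs (Suc k)) - ?F j x) - (\<gamma> / 2) * (norm d)^2"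
  proof -
    have "(1 / t) * (?F j (xs (Suc k)) - ?F j x) \<le> (1/t) * (t * ?P p + t * (\<gamma> / 2) * (norm d)^2)"
      using key t0 by (intro mult_left_mono) auto
    also have "\<dots> = ?P p + (\<gamma> / 2) * (norm d)^2" using t0 by (simp add: field_simps)
    finally show ?thesis by simp
  qed
  have iii: "?F j (xs (Suc k)) - ?F j x \<le> - t * (1 / \<alpha> - \<gamma> / 2) * (norm d)^2"
  proof -
    have "t * ?P p \<le> t * (- ((norm d)^2 / \<alpha>))" using Pp t0 by (intro mult_left_mono) auto
    moreover have "t * (- ((norm d)^2 / \<alpha>)) + t * (\<gamma> / 2) * (norm d)^2 = - t * (1 / \<alpha> - \<gamma> / 2) * (norm d)^2"
      by (simp add: algebra_simps)
    ultimately show ?thesis using key by linarith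
  qed
  have ii: "(norm (xs (Suc k) - z))^2 \<le> (norm (x - z))^2
             + 2 * \<alpha> * (?F j x - ?F j (xs (Suc k)))
             + 2 * \<alpha> * t * Max ((\<lambda>i. ?F i z - ?F i x) ` {1..m})
             - 2 * \<alpha> * t * (1 / \<alpha> - \<gamma> / 2) * (norm d)^2
             + t^2 * (norm d)^2" if z: "z \<in> domF m D" for z
  proof -
    define M where "M = Max ((\<lambda>i. ?F i z - ?F i x) ` {1..m})"
    have PzM: "?P z \<le> M"
    proof (rule psi_le[OF m_pos], intro ballI)
      fix i assume i: "i \<in> {1..m}"
      have "G i z \<ge> G i x + gradG i x \<bullet> (z - x)"
        using grad_ineq[of "G i" "gradG i"] G_convex G_grad i by blast
      moreover have "?F i z - ?F i x \<le> M" unfolding M_def using i by (intro Max_ge) auto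
      ultimately show "gradG i (xs k) \<bullet> (z - xs k) + H i z - H i (xs k) \<le> M" unfolding x_def by simp
    qed
    have vi: "?P p + (d \<bullet> (p - z)) / \<alpha> \<le> ?P z" using pp z by blast
    have "d \<bullet> (p - z) = (norm d)^2 + d \<bullet> (x - z)"
      unfolding d_def by (simp add: power2_norm_eq_inner inner_diff_right algebra_simps)
    have h1: "\<alpha> * (M - ?P p) \<ge> (norm d)^2 + d \<bullet> (x - z)"
    proof -
      have "(d \<bullet> (p - z)) / \<alpha> \<le> M - ?P p" using vi PzM by linarith
      then have "d \<bullet> (p - z) \<le> \<alpha> * (M - ?P p)" using alpha_pos by (simp add: field_simps)
      then show ?thesis using \<open>d \<bullet> (p - z) = (norm d)^2 + d \<bullet> (x - z)\<close> by simp
    qed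
    have h2: "2 * t * (\<alpha> * (M - ?P p)) \<ge> 2 * t * ((norm d)^2 + d \<bullet> (x - z))"
      using h1 t0 by (intro mult_left_mono) auto
    have h3: "2 * \<alpha> * (?F j x - ?F j (xs (Suc k))) \<ge> 2 * \<alpha> * (- t * ?P p - t * (\<gamma> / 2) * (norm d)^2)"
      using key alpha_pos by (intro mult_left_mono) auto
    have nexp: "(norm (xs (Suc k) - z))^2 = (norm (x - z))^2 + 2 * t * ((x - z) \<bullet> d) + t^2 * (norm d)^2"
    proof -
      have "xs (Suc k) - z = (x - z) + t *\<^sub>R d" using st by simp
      then show ?thesis using norm_sq_expand by metis
    qed
    have e1: "2 * \<alpha> * t * (1 / \<alpha> - \<gamma> / 2) * (norm d)^2 = 2 * t * (norm d)^2 - \<alpha> * t * \<gamma> * (norm d)^2"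
      using alpha_pos by (simp add: field_simps)
    have e2: "2 * \<alpha> * (- t * ?P p - t * (\<gamma> / 2) * (norm d)^2) = - 2 * t * (\<alpha> * ?P p) - \<alpha> * t * \<gamma> * (norm d)^2"
      by (simp add: algebra_simps)
    have e3: "2 * t * (\<alpha> * (M - ?P p)) = 2 * \<alpha> * t * M - 2 * t * (\<alpha> * ?P p)"
      by (simp add: algebra_simps)
    have e4: "2 * t * ((norm d)^2 + d \<bullet> (x - z)) = 2 * t * (norm d)^2 + 2 * t * ((x - z) \<bullet> d)"
      by (simp add: algebra_simps inner_commute)
    show ?thesis unfolding M_def[symmetric] using nexp h2 h3 e1 e2 e3 e4 by linarith
  qed
  show ?thesis
    using i ii iii unfolding x_def[symmetric] p_def[symmetric] d_def[symmetric] t_def[symmetric]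
    by (simp add: p_def x_def)
qed

end
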